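(* For every regular language $L\subseteq\Sigma^*$, there is an isomorphism of $\mathbf{JSL}$-dfas $\mathcal{P}(\mathrm{Syn}(L^r))\cong[\mathrm{BLRQ}(L)]^{\mathsf{op}}$ given by \[\{[w_1]_{L^r},\ldots,[w_n]_{L^r}\}\mapsto\bigcap_{i=1}^n\overline{\mathrm{At}(w_i^r)},\] where $\mathrm{At}(x)$ is the unique atom of the boolean algebra $\mathrm{BLRQ}(L)$ containing the word $x$.
   Context: $w^r$ is the reversal of $w$, $L^r=\{w^r:w\in L\}$, $\overline{K}=\Sigma^*\setminus K$, $u^{-1}Lv^{-1}=\{w:uwv\in L\}$. $\mathrm{BLRQ}(L)$ is the boolean subalgebra of $\mathcal{P}(\Sigma^* )$ generated by all two-sided derivatives $u^{-1}Lv^{-1}$, viewed as a $\mathbf{JSL}$-dfa with order $\subseteq$, transitions $K\mapsto a^{-1}K$, initial state $L$, final states the $K$ containing $\epsilon$. The syntactic congruence of a language $K$ is $v\equiv_K w\iff(\forall x,y:\ xvy\in K\Leftrightarrow xwy\in K)$; $[w]_K$ denotes the class of $w$ and $\mathrm{Syn}(K)=\Sigma^*/{\equiv_K}$ is the syntactic monoid, viewed as a dfa with transitions $[w]_K\xrightarrow{a}[wa]_K$, initial state $[\epsilon]_K$, final states $\{[w]_K:w\in K\}$. For a dfa $D$ with state set $Q$, $\mathcal{P}(D)$ is the $\mathbf{JSL}$-dfa with states $(\mathcal{P}(Q),\cup)$, transitions $X\mapsto\delta_a[X]$, initial state $\{q_0\}$, final states the subsets meeting the final states. A $\mathbf{JSL}$-dfa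 is a finite semilattice with join-preserving transitions, an initial state $s_0$ and final states $\{s:s\not\le s_f\}$ for some $s_f$; morphisms are join-preserving maps preserving transitions, initial and final states (both ways). The dual $A^{\mathsf{op}}$ has reversed order, transitions $\delta_a^*(s)=$ largest $t$ with $\delta_a(t)\le s$, initial state the largest non-final state of $A$, final states $\{s:s_0\not\le s\}$. *)

theory Defs
  imports Main
begin

definition rev_lang :: "'a list set \<Rightarrow> 'a list set" where
  "rev_lang L = rev ` L"

definition deriv2 :: "'a list \<Rightarrow> 'a list set \<Rightarrow> 'a list \<Rightarrow> 'a list set" where
  "deriv2 u L v = {w. u @ w @ v \<in> L}"

definition regular :: "'a list set \<Rightarrow> bool" where
  "regular L \<longleftrightarrow> (\<exists>(Q::nat set) \<delta> q0 F. finite Q \<and> q0 \<in> Q \<and> (\<forall>q\<in>Q. \<forall>a. \<delta> q a \<in> Q)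
      \<and> F \<subseteq> Q \<and> L = {w. foldl \<delta> q0 w \<in> F})"

record ('s, 'a) jsl_dfa =
  carrier :: "'s set"
  le :: "'s \<Rightarrow> 's \<Rightarrow> bool"
  trans :: "'a \<Rightarrow> 's \<Rightarrow> 's"
  init :: 's
  final :: "'s set"

definition is_lub :: "('s, 'a) jsl_dfa \<Rightarrow> 's set \<Rightarrow> 's \<Rightarrow> bool" where
  "is_lub A S z \<longleftrightarrow> z \<in> carrier A \<and> (\<forall>x\<in>S. le A x z)
     \<and> (\<forall>y\<in>carrier A. (\<forall>x\<in>S. le A x y) \<longrightarrow> le A z y)"

text \<open>Join-preserving (all finite joins, including the empty join = bottom).\<close>
definition join_pres :: "('s, 'a) jsl_dfa \<Rightarrow> ('t, 'a) jsl_dfa \<Rightarrow> ('s \<Rightarrow> 't) \<Rightarrow> bool" where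
  "join_pres A B f \<longleftrightarrow> (\<forall>S z. finite S \<and> S \<subseteq> carrier A \<and> is_lub A S z \<longrightarrow> is_lub B (f ` S) (f z))"

definition is_jsl_dfa :: "('s, 'a) jsl_dfa \<Rightarrow> bool" where
  "is_jsl_dfa A \<longleftrightarrow> finite (carrier A)
     \<and> (\<forall>x\<in>carrier A. le A x x)
     \<and> (\<forall>x\<in>carrier A. \<forall>y\<in>carrier A. le A x y \<and> le A y x \<longrightarrow> x = y)
     \<and> (\<forall>x\<in>carrier A. \<forall>y\<in>carrier A. \<forall>z\<in>carrier A. le A x y \<and> le A y z \<longrightarrow> le A x z)
     \<and> (\<forall>S. S \<subseteq> carrier A \<longrightarrow> (\<exists>z. is_lub A S z))
     \<and> (\<forall>a. \<forall>x\<in>carrier A. trans A a x \<in> carrier A)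
     \<and> (\<forall>a. join_pres A A (trans A a))
     \<and> init A \<in> carrier A
     \<and> (\<exists>sf\<in>carrier A. final A = {s\<in>carrier A. \<not> le A s sf})"

definition jsl_iso :: "('s, 'a) jsl_dfa \<Rightarrow> ('t, 'a) jsl_dfa \<Rightarrow> ('s \<Rightarrow> 't) \<Rightarrow> bool" where
  "jsl_iso A B f \<longleftrightarrow> bij_betw f (carrier A) (carrier B)
     \<and> join_pres A B f
     \<and> (\<forall>a. \<forall>x\<in>carrier A. f (trans A a x) = trans B a (f x))
     \<and> f (init A) = init B
     \<and> (\<forall>x\<in>carrier A. x \<in> final A \<longleftrightarrow> f x \<in> final B)"

definition largest :: "('s, 'a) jsl_dfa \<Rightarrow> ('s \<Rightarrow> bool) \<Rightarrow> 's" where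
  "largest A P = (THE t. t \<in> carrier A \<and> P t \<and> (\<forall>u\<in>carrier A. P u \<longrightarrow> le A u t))"

definition dual :: "('s, 'a) jsl_dfa \<Rightarrow> ('s, 'a) jsl_dfa" where
  "dual A = \<lparr> carrier = carrier A,
              le = (\<lambda>x y. le A y x),
              trans = (\<lambda>a s. largest A (\<lambda>t. le A (trans A a t) s)),
              init = largest A (\<lambda>s. s \<notin> final A),
              final = {s\<in>carrier A. \<not> le A (init A) s} \<rparr>"

definition syn_equiv :: "'a list set \<Rightarrow> 'a list \<Rightarrow> 'a list \<Rightarrow> bool" where
  "syn_equiv K v w \<longleftrightarrow> (\<forall>x y. x @ v @ y \<in> K \<longleftrightarrow> x @ w @ y \<in> K)"

definition syn_class :: "'a list set \<Rightarrow> 'a list \<Rightarrow> 'a list set" where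
  "syn_class K w = {v. syn_equiv K v w}"

definition syn_states :: "'a list set \<Rightarrow> 'a list set set" where
  "syn_states K = range (syn_class K)"

text \<open>Transition of Syn(K): [w] --a--> [wa] (well defined since the congruence is right-compatible).\<close>
definition syn_delta :: "'a list set \<Rightarrow> 'a \<Rightarrow> 'a list set \<Rightarrow> 'a list set" where
  "syn_delta K a c = syn_class K ((SOME w. w \<in> c) @ [a])"

definition syn_final :: "'a list set \<Rightarrow> 'a list set set" where
  "syn_final K = syn_class K ` K"

definition pow_syn :: "'a list set \<Rightarrow> ('a list set set, 'a) jsl_dfa" where
  "pow_syn K = \<lparr> carrier = Pow (syn_states K),
                 le = (\<subseteq>),
                 trans = (\<lambda>a X. syn_delta K a ` X),
                 init = {syn_class K []},
                 final = {X \<in> Pow (syn_states K). X \<inter> syn_final K \<noteq> {}} \<rparr>"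

inductive_set blrq_set :: "'a list set \<Rightarrow> 'a list set set" for L where
  deriv: "deriv2 u L v \<in> blrq_set L"
| empty: "{} \<in> blrq_set L"
| compl: "K \<in> blrq_set L \<Longrightarrow> - K \<in> blrq_set L"
| union: "K \<in> blrq_set L \<Longrightarrow> K' \<in> blrq_set L \<Longrightarrow> K \<union> K' \<in> blrq_set L"

definition blrq :: "'a list set \<Rightarrow> ('a list set, 'a) jsl_dfa" where
  "blrq L = \<lparr> carrier = blrq_set L,
              le = (\<subseteq>),
              trans = (\<lambda>a K. {w. a # w \<in> K}),
              init = L,
              final = {K \<in> blrq_set L. [] \<in> K} \<rparr>"

definition is_atom :: "'a list set \<Rightarrow> 'a list set \<Rightarrow> bool" where
  "is_atom L A \<longleftrightarrow> A \<in> blrq_set L \<and> A \<noteq> {} \<and> (\<forall>B\<in>blrq_set L. B \<subseteq> A \<longrightarrow> B = {} \<or> B = A)"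

definition At :: "'a list set \<Rightarrow> 'a list \<Rightarrow> 'a list set" where
  "At L x = (THE A. is_atom L A \<and> x \<in> A)"

definition iso_map :: "'a list set \<Rightarrow> 'a list set set \<Rightarrow> 'a list set" where
  "iso_map L X = \<Inter> {- At L (rev w) | w. syn_class (rev_lang L) w \<in> X}"

end

theory Submission imports Defs "HOL-Library.FuncSet" begin

lemma se_refl: "syn_equiv K v v" by (simp add: syn_equiv_def)
lemma se_sym: "syn_equiv K v w \<Longrightarrow> syn_equiv K w v" by (simp add: syn_equiv_def)
lemma se_trans: "syn_equiv K u v \<Longrightarrow> syn_equiv K v w \<Longrightarrow> syn_equiv K u w"
  by (simp add: syn_equiv_def)

lemma sc_eq: "syn_class K x = syn_class K y \<longleftrightarrow> syn_equiv K x y"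
  unfolding syn_class_def
  by (auto intro: se_refl dest: se_sym se_trans)

lemma sc_mem: "v \<in> syn_class K w \<longleftrightarrow> syn_equiv K v w"
  by (simp add: syn_class_def)

lemma mem_rev_lang: "x \<in> rev_lang L \<longleftrightarrow> rev x \<in> L"
  unfolding rev_lang_def by (metis image_iff rev_rev_ident)

lemma se_rev: "syn_equiv (rev_lang L) v w \<longleftrightarrow> syn_equiv L (rev v) (rev w)"
proof
  assume h: "syn_equiv (rev_lang L) v w"
  show "syn_equiv L (rev v) (rev w)" unfolding syn_equiv_def
  proof (intro allI)
    fix x y
    have "rev y @ v @ rev x \<in> rev_lang L \<longleftrightarrow> rev y @ w @ rev x \<in> rev_lang L"
      using h by (simp add: syn_equiv_def)
    then show "x @ rev v @ y \<in> L \<longleftrightarrow> x @ rev w @ y \<in> L" by (simp add: mem_rev_lang)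
  qed
next
  assume h: "syn_equiv L (rev v) (rev w)"
  show "syn_equiv (rev_lang L) v w" unfolding syn_equiv_def
  proof (intro allI)
    fix x y
    have "rev y @ rev v @ rev x \<in> L \<longleftrightarrow> rev y @ rev w @ rev x \<in> L"
      using h by (simp add: syn_equiv_def)
    then show "x @ v @ y \<in> rev_lang L \<longleftrightarrow> x @ w @ y \<in> rev_lang L" by (simp add: mem_rev_lang)
  qed
qed

lemma se_right: "syn_equiv K v w \<Longrightarrow> syn_equiv K (v@[a]) (w@[a])"
  unfolding syn_equiv_def by (metis append.assoc append_Cons append_Nil)

lemma se_iff: "syn_equiv K v w \<Longrightarrow> syn_equiv K v x \<longleftrightarrow> syn_equiv K w x"
  by (meson se_sym se_trans)

lemma syn_delta_class: "syn_delta K a (syn_class K w) = syn_class K (w@[a])"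
proof -
  have "(SOME w'. w' \<in> syn_class K w) \<in> syn_class K w"
    by (rule someI[of _ w]) (simp add: sc_mem se_refl)
  then show ?thesis unfolding syn_delta_def
    by (simp add: sc_eq sc_mem se_right)
qed

lemma foldl_in: "q \<in> Q \<Longrightarrow> \<forall>q\<in>Q. \<forall>a. \<delta> q a \<in> Q \<Longrightarrow> foldl \<delta> q w \<in> Q"
  by (induction w arbitrary: q) auto

lemma finite_classes:
  assumes "regular L"
  shows "finite (range (syn_class (rev_lang L)))"
proof -
  obtain Q :: "nat set" and \<delta> q0 F where Q: "finite Q" "q0 \<in> Q" "\<forall>q\<in>Q. \<forall>a. \<delta> q a \<in> Q"
     "L = {w. foldl \<delta> q0 w \<in> F}"
    using assms unfolding regular_def by blast
  define \<tau> where "\<tau> w = restrict (\<lambda>q. foldl \<delta> q (rev w)) Q" for w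
  have tau_in: "\<tau> w \<in> Q \<rightarrow>\<^sub>E Q" for w
    using Q(3) by (auto simp: \<tau>_def intro: foldl_in)
  have key: "\<tau> v = \<tau> w \<Longrightarrow> syn_class (rev_lang L) v = syn_class (rev_lang L) w" for v w
  proof -
    assume h: "\<tau> v = \<tau> w"
    have "syn_equiv L (rev v) (rev w)" unfolding syn_equiv_def
    proof (intro allI)
      fix x y
      have qx: "foldl \<delta> q0 x \<in> Q" using Q by (intro foldl_in)
      have "foldl \<delta> (foldl \<delta> q0 x) (rev v) = foldl \<delta> (foldl \<delta> q0 x) (rev w)"
        using fun_cong[OF h, of "foldl \<delta> q0 x"] qx by (simp add: \<tau>_def)
      then show "x @ rev v @ y \<in> L \<longleftrightarrow> x @ rev w @ y \<in> L" by (simp add: Q(4))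
    qed
    then show ?thesis by (simp add: sc_eq se_rev)
  qed
  have "range (syn_class (rev_lang L)) \<subseteq> (\<lambda>f. syn_class (rev_lang L) (SOME w. \<tau> w = f)) ` (Q \<rightarrow>\<^sub>E Q)"
  proof
    fix c assume "c \<in> range (syn_class (rev_lang L))"
    then obtain w where c: "c = syn_class (rev_lang L) w" by blast
    have "\<tau> (SOME w'. \<tau> w' = \<tau> w) = \<tau> w" by (rule someI) simp
    then have "c = syn_class (rev_lang L) (SOME w'. \<tau> w' = \<tau> w)" using key c by metis
    then show "c \<in> (\<lambda>f. syn_class (rev_lang L) (SOME w. \<tau> w = f)) ` (Q \<rightarrow>\<^sub>E Q)"
      using tau_in by blast
  qed
  moreover have "finite (Q \<rightarrow>\<^sub>E Q)" using Q(1) by (simp add: finite_PiE)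
  ultimately show ?thesis by (meson finite_imageI finite_subset)
qed

definition Sat :: "'a list set \<Rightarrow> 'a list set set" where
  "Sat L = {B. \<forall>v w. syn_equiv L v w \<longrightarrow> (v\<in>B \<longleftrightarrow> w\<in>B)}"

lemma sc_rev: "syn_class L x = rev ` syn_class (rev_lang L) (rev x)"
proof -
  have *: "y \<in> syn_class L x \<longleftrightarrow> rev y \<in> syn_class (rev_lang L) (rev x)" for y
    by (simp add: sc_mem se_rev)
  show ?thesis
  proof (intro set_eqI iffI)
    fix y assume "y \<in> syn_class L x"
    then have "rev y \<in> syn_class (rev_lang L) (rev x)" using * by blast
    then show "y \<in> rev ` syn_class (rev_lang L) (rev x)" by (metis image_eqI rev_rev_ident)
  next
    fix y assume "y \<in> rev ` syn_class (rev_lang L) (rev x)"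
    then obtain z where "z \<in> syn_class (rev_lang L) (rev x)" "y = rev z" by blast
    then show "y \<in> syn_class L x" using * by simp
  qed
qed

lemma finite_classes_L:
  assumes "regular L"
  shows "finite (range (syn_class L))"
proof -
  have "range (syn_class L) \<subseteq> (\<lambda>C. rev ` C) ` range (syn_class (rev_lang L))"
    using sc_rev by blast
  then show ?thesis using finite_classes[OF assms] by (meson finite_imageI finite_subset)
qed

lemma Sat_union_classes: "B \<in> Sat L \<Longrightarrow> B = \<Union> (syn_class L ` B)"
proof (intro set_eqI iffI)
  fix x assume "x \<in> B"
  moreover have "x \<in> syn_class L x" by (simp add: sc_mem se_refl)
  ultimately show "x \<in> \<Union> (syn_class L ` B)" by blast
next
  fix x assume B: "B \<in> Sat L" and "x \<in> \<Union> (syn_class L ` B)"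
  then obtain y where "y \<in> B" "syn_equiv L x y" by (auto simp: sc_mem)
  then show "x \<in> B" using B unfolding Sat_def by blast
qed

lemma finite_Sat:
  assumes "regular L"
  shows "finite (Sat L)"
proof -
  have "Sat L \<subseteq> Union ` Pow (range (syn_class L))"
  proof
    fix B assume "B \<in> Sat L"
    then have "B = \<Union> (syn_class L ` B)" by (rule Sat_union_classes)
    moreover have "syn_class L ` B \<in> Pow (range (syn_class L))" by blast
    ultimately show "B \<in> Union ` Pow (range (syn_class L))" by (rule image_eqI)
  qed
  then show ?thesis using finite_classes_L[OF assms] by (meson finite_Pow_iff finite_imageI finite_subset)
qed

lemma blrq_sub_Sat: "K \<in> blrq_set L \<Longrightarrow> K \<in> Sat L"
proof (induction rule: blrq_set.induct)
  case (deriv u v)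
  show ?case unfolding Sat_def deriv2_def
  proof (rule CollectI, intro allI impI)
    fix x y assume "syn_equiv L x y"
    then have "u @ x @ v \<in> L \<longleftrightarrow> u @ y @ v \<in> L" unfolding syn_equiv_def by blast
    then show "x \<in> {w. u @ w @ v \<in> L} \<longleftrightarrow> y \<in> {w. u @ w @ v \<in> L}" by simp
  qed
next
  case empty then show ?case by (simp add: Sat_def)
next
  case (compl K) then show ?case unfolding Sat_def by blast
next
  case (union K K') then show ?case unfolding Sat_def by blast
qed

lemma blrq_Union: "finite F \<Longrightarrow> F \<subseteq> blrq_set L \<Longrightarrow> \<Union>F \<in> blrq_set L"
  by (induction rule: finite_induct) (auto intro: blrq_set.intros)

lemma blrq_Inter: "finite F \<Longrightarrow> F \<subseteq> blrq_set L \<Longrightarrow> \<Inter>F \<in> blrq_set L"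
proof -
  assume f: "finite F" "F \<subseteq> blrq_set L"
  have "\<Union>(uminus ` F) \<in> blrq_set L" using f by (intro blrq_Union) (auto intro: blrq_set.intros)
  then have "- \<Union>(uminus ` F) \<in> blrq_set L" by (rule blrq_set.compl)
  moreover have "- \<Union>(uminus ` F) = \<Inter>F" by auto
  ultimately show ?thesis by simp
qed

lemma class_in_blrq:
  assumes "regular L"
  shows "syn_class L x \<in> blrq_set L"
proof -
  define D where "D = range (\<lambda>(u,v). deriv2 u L v)"
  have Dsub: "D \<subseteq> blrq_set L" unfolding D_def by (auto intro: blrq_set.deriv)
  then have "D \<subseteq> Sat L" using blrq_sub_Sat by blast
  then have fD: "finite D" using finite_Sat[OF assms] finite_subset by blast
  define G where "G = {K \<in> D \<union> uminus ` D. x \<in> K}"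
  have fG: "finite G" using fD unfolding G_def by auto
  have Gsub: "G \<subseteq> blrq_set L" using Dsub unfolding G_def by (auto intro: blrq_set.compl)
  have "syn_class L x = \<Inter>G"
  proof
    show "syn_class L x \<subseteq> \<Inter>G"
    proof
      fix y assume y: "y \<in> syn_class L x"
      show "y \<in> \<Inter>G"
      proof
        fix K assume K: "K \<in> G"
        have "K \<in> Sat L" using K Gsub blrq_sub_Sat by blast
        then show "y \<in> K" using K y unfolding G_def Sat_def by (auto simp: sc_mem)
      qed
    qed
  next
    show "\<Inter>G \<subseteq> syn_class L x"
    proof
      fix y assume y: "y \<in> \<Inter>G"
      have "u @ y @ v \<in> L \<longleftrightarrow> u @ x @ v \<in> L" for u v
      proof (cases "u @ x @ v \<in> L")
        case True
        then have "deriv2 u L v \<in> G" unfolding G_def D_def deriv2_def by auto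
        then show ?thesis using y True by (auto simp: deriv2_def)
      next
        case False
        then have "- deriv2 u L v \<in> G" unfolding G_def D_def deriv2_def by auto
        then show ?thesis using y False by (auto simp: deriv2_def)
      qed
      then show "y \<in> syn_class L x" by (simp add: sc_mem syn_equiv_def)
    qed
  qed
  then show ?thesis using fG Gsub blrq_Inter by metis
qed

lemma blrq_eq_Sat:
  assumes "regular L"
  shows "blrq_set L = Sat L"
proof
  show "blrq_set L \<subseteq> Sat L" using blrq_sub_Sat by blast
  show "Sat L \<subseteq> blrq_set L"
  proof
    fix B assume B: "B \<in> Sat L"
    have "finite (syn_class L ` B)"
      using finite_classes_L[OF assms] by (meson finite_subset image_mono subset_UNIV)
    moreover have "syn_class L ` B \<subseteq> blrq_set L" using class_in_blrq[OF assms] by blast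
    ultimately show "B \<in> blrq_set L" using Sat_union_classes[OF B] blrq_Union by metis
  qed
qed

lemma At_eq:
  assumes "regular L"
  shows "At L x = syn_class L x"
proof -
  have cS: "syn_class L x \<in> Sat L" unfolding Sat_def
    by (simp add: sc_mem se_iff)
  have atom: "is_atom L (syn_class L x)"
    unfolding is_atom_def blrq_eq_Sat[OF assms]
  proof (intro conjI ballI impI)
    show "syn_class L x \<in> Sat L" by (rule cS)
    show "syn_class L x \<noteq> {}" using se_refl[of L x] sc_mem[of x L x] by blast
  next
    fix B assume B: "B \<in> Sat L" "B \<subseteq> syn_class L x"
    show "B = {} \<or> B = syn_class L x"
    proof (cases "B = {}")
      case False
      then obtain y where y: "y \<in> B" by blast
      have "syn_class L x \<subseteq> B"
      proof
        fix z assume "z \<in> syn_class L x"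
        moreover have "y \<in> syn_class L x" using y B by blast
        ultimately have "syn_equiv L y z" by (simp add: sc_mem) (meson se_sym se_trans)
        then show "z \<in> B" using B(1) y unfolding Sat_def by blast
      qed
      then show ?thesis using B by blast
    qed simp
  qed
  have uniq: "A = syn_class L x" if "is_atom L A \<and> x \<in> A" for A
  proof -
    have AS: "A \<in> Sat L" using that unfolding is_atom_def blrq_eq_Sat[OF assms] by blast
    have "syn_class L x \<subseteq> A"
    proof
      fix z assume "z \<in> syn_class L x"
      then have "syn_equiv L x z" by (simp add: sc_mem se_sym)
      then show "z \<in> A" using AS that unfolding Sat_def by blast
    qed
    moreover have "syn_class L x \<in> blrq_set L" using cS blrq_eq_Sat[OF assms] by simp
    moreover have "syn_class L x \<noteq> {}" using atom unfolding is_atom_def by blast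
    ultimately show ?thesis using that unfolding is_atom_def by blast
  qed
  have xin: "x \<in> syn_class L x" using se_refl[of L x] sc_mem[of x L x] by blast
  show ?thesis unfolding At_def
    by (rule the_equality) (use atom uniq xin in blast)+
qed


lemma cR_eq: "syn_class (rev_lang L) (rev v) = syn_class (rev_lang L) w \<longleftrightarrow> syn_equiv L v (rev w)"
  by (simp add: sc_eq se_rev)

lemma iso_eq:
  assumes "regular L"
  shows "iso_map L X = {v. syn_class (rev_lang L) (rev v) \<notin> X}"
proof (intro set_eqI)
  fix v
  have "v \<in> iso_map L X \<longleftrightarrow> (\<forall>w. syn_class (rev_lang L) w \<in> X \<longrightarrow> \<not> syn_equiv L v (rev w))"
    unfolding iso_map_def At_eq[OF assms] sc_mem[symmetric] by blast
  also have "\<dots> \<longleftrightarrow> syn_class (rev_lang L) (rev v) \<notin> X"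
    using cR_eq[of L v] by metis
  finally show "v \<in> iso_map L X \<longleftrightarrow> v \<in> {v. syn_class (rev_lang L) (rev v) \<notin> X}" by simp
qed

definition Tr :: "'a list set \<Rightarrow> 'a \<Rightarrow> 'a list set \<Rightarrow> 'a list set" where
  "Tr L a s = {v. \<forall>w. syn_equiv L v (a#w) \<longrightarrow> w \<in> s}"

lemma largest_eq:
  assumes "\<forall>x\<in>carrier A. \<forall>y\<in>carrier A. le A x y \<and> le A y x \<longrightarrow> x = y"
    and "t \<in> carrier A" "P t" "\<forall>u\<in>carrier A. P u \<longrightarrow> le A u t"
  shows "largest A P = t"
  unfolding largest_def
  by (rule the_equality) (use assms in blast)+

lemma Tr_Sat: "Tr L a s \<in> Sat L"
  unfolding Sat_def Tr_def
proof (rule CollectI, intro allI impI)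
  fix v v' assume h: "syn_equiv L v v'"
  show "v \<in> {v. \<forall>w. syn_equiv L v (a # w) \<longrightarrow> w \<in> s} \<longleftrightarrow> v' \<in> {v. \<forall>w. syn_equiv L v (a # w) \<longrightarrow> w \<in> s}"
    using se_iff[OF h] by simp
qed

lemma dual_blrq:
  assumes "regular L"
  shows "dual (blrq L) = \<lparr> carrier = Sat L, le = (\<lambda>x y. y \<subseteq> x), trans = Tr L,
     init = {v. \<not> syn_equiv L v []}, final = {s \<in> Sat L. \<not> L \<subseteq> s} \<rparr>"
proof -
  have anti: "\<forall>x\<in>carrier (blrq L). \<forall>y\<in>carrier (blrq L). le (blrq L) x y \<and> le (blrq L) y x \<longrightarrow> x = y"
    by (auto simp: blrq_def)
  have tr: "largest (blrq L) (\<lambda>t. le (blrq L) (trans (blrq L) a t) s) = Tr L a s" for a s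
  proof (rule largest_eq[OF anti])
    show "Tr L a s \<in> carrier (blrq L)" using Tr_Sat by (simp add: blrq_def blrq_eq_Sat[OF assms])
    show "le (blrq L) (trans (blrq L) a (Tr L a s)) s"
      by (auto simp: blrq_def Tr_def se_refl)
    show "\<forall>u\<in>carrier (blrq L). le (blrq L) (trans (blrq L) a u) s \<longrightarrow> le (blrq L) u (Tr L a s)"
    proof (intro ballI impI)
      fix u assume u: "u \<in> carrier (blrq L)" "le (blrq L) (trans (blrq L) a u) s"
      then have uS: "u \<in> Sat L" and us: "\<And>w. a # w \<in> u \<Longrightarrow> w \<in> s"
        by (auto simp: blrq_def blrq_eq_Sat[OF assms])
      show "le (blrq L) u (Tr L a s)" unfolding blrq_def Tr_def
      proof (simp, intro subsetI CollectI allI impI)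
        fix v w assume "v \<in> u" "syn_equiv L v (a # w)"
        then have "a # w \<in> u" using uS unfolding Sat_def by blast
        then show "w \<in> s" by (rule us)
      qed
    qed
  qed
  have ini: "largest (blrq L) (\<lambda>s. s \<notin> final (blrq L)) = {v. \<not> syn_equiv L v []}"
  proof (rule largest_eq[OF anti])
    show "{v. \<not> syn_equiv L v []} \<in> carrier (blrq L)"
      unfolding blrq_def blrq_eq_Sat[OF assms] Sat_def
      by (simp add: se_iff)
    show "{v. \<not> syn_equiv L v []} \<notin> final (blrq L)" by (simp add: blrq_def se_refl)
    show "\<forall>u\<in>carrier (blrq L). u \<notin> final (blrq L) \<longrightarrow> le (blrq L) u {v. \<not> syn_equiv L v []}"
    proof (intro ballI impI)
      fix u assume u: "u \<in> carrier (blrq L)" "u \<notin> final (blrq L)"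
      then have uS: "u \<in> Sat L" and e: "[] \<notin> u"
        by (auto simp: blrq_def blrq_eq_Sat[OF assms])
      show "le (blrq L) u {v. \<not> syn_equiv L v []}" unfolding blrq_def
      proof (simp, intro subsetI CollectI notI)
        fix v assume "v \<in> u" "syn_equiv L v []"
        then have "[] \<in> u" using uS unfolding Sat_def by blast
        then show False using e by simp
      qed
    qed
  qed
  show ?thesis
    unfolding dual_def tr ini
    by (simp add: blrq_def blrq_eq_Sat[OF assms] fun_eq_iff)
qed


lemma pow_lub:
  assumes "S \<subseteq> Pow (syn_states K)"
  shows "is_lub (pow_syn K) S z \<longleftrightarrow> z = \<Union>S"
proof
  assume h: "is_lub (pow_syn K) S z"
  have u: "\<Union>S \<in> Pow (syn_states K)" using assms by blast
  from h have "z \<in> Pow (syn_states K)" "\<forall>x\<in>S. x \<subseteq> z"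
     "\<forall>y\<in>Pow (syn_states K). (\<forall>x\<in>S. x \<subseteq> y) \<longrightarrow> z \<subseteq> y"
    unfolding is_lub_def pow_syn_def by simp_all
  then have "z \<subseteq> \<Union>S" "\<Union>S \<subseteq> z" using u by blast+
  then show "z = \<Union>S" by blast
next
  assume "z = \<Union>S"
  then show "is_lub (pow_syn K) S z" using assms unfolding is_lub_def pow_syn_def by auto
qed

lemma Sat_Inter: "S \<subseteq> Sat L \<Longrightarrow> \<Inter>S \<in> Sat L"
  unfolding Sat_def
proof (rule CollectI, intro allI impI)
  fix v w assume S: "S \<subseteq> {B. \<forall>v w. syn_equiv L v w \<longrightarrow> (v \<in> B) = (w \<in> B)}" and e: "syn_equiv L v w"
  have "\<forall>B\<in>S. (v \<in> B) = (w \<in> B)" using S e by blast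
  then show "(v \<in> \<Inter>S) = (w \<in> \<Inter>S)" by simp
qed

lemma D_lub:
  assumes "S \<subseteq> Sat L"
  shows "is_lub \<lparr> carrier = Sat L, le = (\<lambda>x y. y \<subseteq> x), trans = Tr L,
     init = i, final = f \<rparr> S z \<longleftrightarrow> z = \<Inter>S"
proof
  assume h: "is_lub \<lparr> carrier = Sat L, le = (\<lambda>x y. y \<subseteq> x), trans = Tr L,
     init = i, final = f \<rparr> S z"
  have u: "\<Inter>S \<in> Sat L" using Sat_Inter[OF assms] .
  from h have "z \<in> Sat L" "\<forall>x\<in>S. z \<subseteq> x"
     "\<forall>y\<in>Sat L. (\<forall>x\<in>S. y \<subseteq> x) \<longrightarrow> y \<subseteq> z"
    unfolding is_lub_def by simp_all
  then have "z \<subseteq> \<Inter>S" "\<Inter>S \<subseteq> z" using u by blast+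
  then show "z = \<Inter>S" by blast
next
  assume "z = \<Inter>S"
  then show "is_lub \<lparr> carrier = Sat L, le = (\<lambda>x y. y \<subseteq> x), trans = Tr L,
     init = i, final = f \<rparr> S z" using Sat_Inter[OF assms] unfolding is_lub_def by auto
qed

lemma L_Sat: "L \<in> Sat L"
  unfolding Sat_def
proof (rule CollectI, intro allI impI)
  fix v w assume "syn_equiv L v w"
  then have "[] @ v @ [] \<in> L \<longleftrightarrow> [] @ w @ [] \<in> L" unfolding syn_equiv_def by blast
  then show "(v \<in> L) = (w \<in> L)" by simp
qed

lemma Tr_Inter: "Tr L a (\<Inter>S) = \<Inter>(Tr L a ` S)"
  unfolding Tr_def by auto

lemma syn_delta_img:
  assumes "X \<subseteq> syn_states K"
  shows "syn_delta K a ` X = {syn_class K (w @ [a]) | w. syn_class K w \<in> X}"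
proof (intro set_eqI iffI)
  fix c assume "c \<in> syn_delta K a ` X"
  then obtain d where d: "d \<in> X" "c = syn_delta K a d" by blast
  then obtain w where w: "d = syn_class K w" using assms unfolding syn_states_def by blast
  have "c = syn_class K (w @ [a])" using d(2) unfolding w by (simp add: syn_delta_class)
  moreover have "syn_class K w \<in> X" using d(1) w by simp
  ultimately show "c \<in> {syn_class K (w @ [a]) | w. syn_class K w \<in> X}" by blast
next
  fix c assume "c \<in> {syn_class K (w @ [a]) | w. syn_class K w \<in> X}"
  then obtain w where w: "c = syn_class K (w @ [a])" "syn_class K w \<in> X" by blast
  have "c = syn_delta K a (syn_class K w)" using w(1) by (simp add: syn_delta_class)
  then show "c \<in> syn_delta K a ` X" using w(2) by blast
qed

theorem proposition3p13:
  fixes L :: "('a::finite) list set"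
  assumes "regular L"
  shows "is_jsl_dfa (pow_syn (rev_lang L)) \<and> is_jsl_dfa (dual (blrq L))
    \<and> jsl_iso (pow_syn (rev_lang L)) (dual (blrq L)) (iso_map L)"
proof -
  let ?R = "rev_lang L"
  let ?C = "syn_states ?R"
  have finC: "finite ?C" using finite_classes[OF assms] by (simp add: syn_states_def)
  have P1: "is_jsl_dfa (pow_syn ?R)"
    unfolding is_jsl_dfa_def
  proof (intro conjI allI ballI impI)
    show "finite (carrier (pow_syn ?R))" using finC by (simp add: pow_syn_def)
    show "\<exists>z. is_lub (pow_syn ?R) S z" if "S \<subseteq> carrier (pow_syn ?R)" for S
    proof -
      have "S \<subseteq> Pow ?C" using that by (simp add: pow_syn_def)
      then show ?thesis using pow_lub[of S ?R] by blast
    qed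
    show "trans (pow_syn ?R) a x \<in> carrier (pow_syn ?R)" for a x
      unfolding pow_syn_def syn_delta_def syn_states_def by simp blast
    show "join_pres (pow_syn ?R) (pow_syn ?R) (trans (pow_syn ?R) a)" for a
      unfolding join_pres_def
    proof (intro allI impI)
      fix S z assume h: "finite S \<and> S \<subseteq> carrier (pow_syn ?R) \<and> is_lub (pow_syn ?R) S z"
      then have S: "S \<subseteq> Pow ?C" by (simp add: pow_syn_def)
      then have z: "z = \<Union>S" using h pow_lub[OF S] by simp
      have T: "trans (pow_syn ?R) a ` S \<subseteq> Pow ?C"
        unfolding pow_syn_def syn_delta_def syn_states_def by auto
      have E: "trans (pow_syn ?R) a z = \<Union>(trans (pow_syn ?R) a ` S)"
        unfolding z pow_syn_def by auto
      show "is_lub (pow_syn ?R) (trans (pow_syn ?R) a ` S) (trans (pow_syn ?R) a z)"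
        using pow_lub[OF T] E by simp
    qed
    show "init (pow_syn ?R) \<in> carrier (pow_syn ?R)"
      by (simp add: pow_syn_def syn_states_def)
    have sfC: "syn_final ?R \<subseteq> ?C" unfolding syn_final_def syn_states_def by blast
    show "\<exists>sf\<in>carrier (pow_syn ?R). final (pow_syn ?R) = {s \<in> carrier (pow_syn ?R). \<not> le (pow_syn ?R) s sf}"
    proof (rule bexI[of _ "?C - syn_final ?R"])
      show "?C - syn_final ?R \<in> carrier (pow_syn ?R)" by (simp add: pow_syn_def)
      show "final (pow_syn ?R) = {s \<in> carrier (pow_syn ?R). \<not> le (pow_syn ?R) s (?C - syn_final ?R)}"
        unfolding pow_syn_def using sfC by auto
    qed
  next
    fix x assume "x \<in> carrier (pow_syn ?R)" then show "le (pow_syn ?R) x x" by (simp add: pow_syn_def)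
  next
    fix x y assume "x \<in> carrier (pow_syn ?R)" "y \<in> carrier (pow_syn ?R)"
      "le (pow_syn ?R) x y \<and> le (pow_syn ?R) y x"
    then show "x = y" by (auto simp: pow_syn_def)
  next
    fix x y z assume "x \<in> carrier (pow_syn ?R)" "y \<in> carrier (pow_syn ?R)" "z \<in> carrier (pow_syn ?R)"
      "le (pow_syn ?R) x y \<and> le (pow_syn ?R) y z"
    then show "le (pow_syn ?R) x z" by (auto simp: pow_syn_def)
  qed
  let ?D = "\<lparr> carrier = Sat L, le = (\<lambda>x y. y \<subseteq> x), trans = Tr L,
     init = {v. \<not> syn_equiv L v []}, final = {s \<in> Sat L. \<not> L \<subseteq> s} \<rparr>"
  have dD: "dual (blrq L) = ?D" by (rule dual_blrq[OF assms])
  have P2: "is_jsl_dfa ?D"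
    unfolding is_jsl_dfa_def
  proof (intro conjI allI ballI impI)
    show "finite (carrier ?D)" using finite_Sat[OF assms] by simp
    show "\<exists>z. is_lub ?D S z" if "S \<subseteq> carrier ?D" for S
      using D_lub[of S L] that by auto
    show "trans ?D a x \<in> carrier ?D" for a x by (simp add: Tr_Sat)
    show "join_pres ?D ?D (trans ?D a)" for a
      unfolding join_pres_def
    proof (intro allI impI)
      fix S z assume h: "finite S \<and> S \<subseteq> carrier ?D \<and> is_lub ?D S z"
      then have S: "S \<subseteq> Sat L" by simp
      then have z: "z = \<Inter>S" using h D_lub by blast
      have "Tr L a ` S \<subseteq> Sat L" by (intro image_subsetI Tr_Sat)
      then show "is_lub ?D (trans ?D a ` S) (trans ?D a z)"
        using D_lub[of "Tr L a ` S" L] z Tr_Inter by simp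
    qed
    show "init ?D \<in> carrier ?D" unfolding Sat_def by (simp add: se_iff)
    show "\<exists>sf\<in>carrier ?D. final ?D = {s \<in> carrier ?D. \<not> le ?D s sf}"
      by (rule bexI[of _ L]) (use L_Sat in auto)
  qed auto
  have isoE: "iso_map L X = {v. syn_class ?R (rev v) \<notin> X}" for X by (rule iso_eq[OF assms])
  have isoSat: "iso_map L X \<in> Sat L" for X
    unfolding isoE Sat_def
  proof (rule CollectI, intro allI impI)
    fix v w assume "syn_equiv L v w"
    then have "syn_class ?R (rev v) = syn_class ?R (rev w)" by (simp add: sc_eq se_rev)
    then show "v \<in> {v. syn_class ?R (rev v) \<notin> X} \<longleftrightarrow> w \<in> {v. syn_class ?R (rev v) \<notin> X}" by simp
  qed
  have bij: "bij_betw (iso_map L) (Pow ?C) (Sat L)"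
    unfolding bij_betw_def
  proof
    show "inj_on (iso_map L) (Pow ?C)"
    proof (rule inj_onI)
      fix X Y assume X: "X \<in> Pow ?C" and Y: "Y \<in> Pow ?C" and e: "iso_map L X = iso_map L Y"
      show "X = Y"
      proof (rule ccontr)
        assume "X \<noteq> Y"
        then obtain c where "c \<in> X \<and> c \<notin> Y \<or> c \<in> Y \<and> c \<notin> X" by blast
        moreover have "c \<in> ?C" if "c \<in> X \<or> c \<in> Y" using X Y that by blast
        ultimately obtain w where "c = syn_class ?R w" "c \<in> X \<and> c \<notin> Y \<or> c \<in> Y \<and> c \<notin> X"
          unfolding syn_states_def by blast
        then have "(rev w \<in> iso_map L X) \<noteq> (rev w \<in> iso_map L Y)"
          unfolding isoE by auto
        then show False using e by simp
      qed
    qed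
    show "iso_map L ` Pow ?C = Sat L"
    proof
      show "iso_map L ` Pow ?C \<subseteq> Sat L" using isoSat by blast
      show "Sat L \<subseteq> iso_map L ` Pow ?C"
      proof
        fix s assume s: "s \<in> Sat L"
        define X where "X = {syn_class ?R w | w. rev w \<notin> s}"
        have "X \<in> Pow ?C" unfolding X_def syn_states_def by blast
        moreover have "iso_map L X = s"
        proof (intro set_eqI)
          fix v
          have "syn_class ?R (rev v) \<in> X \<longleftrightarrow> v \<notin> s"
          proof
            assume "syn_class ?R (rev v) \<in> X"
            then obtain w where "syn_class ?R (rev v) = syn_class ?R w" "rev w \<notin> s"
              unfolding X_def by blast
            then have "syn_equiv L v (rev w)" "rev w \<notin> s" using cR_eq by blast+
            then show "v \<notin> s" using s unfolding Sat_def by blast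
          next
            assume "v \<notin> s"
            then show "syn_class ?R (rev v) \<in> X" unfolding X_def by fastforce
          qed
          then show "v \<in> iso_map L X \<longleftrightarrow> v \<in> s" unfolding isoE by blast
        qed
        ultimately show "s \<in> iso_map L ` Pow ?C" by blast
      qed
    qed
  qed
  have P3: "jsl_iso (pow_syn ?R) ?D (iso_map L)"
    unfolding jsl_iso_def
  proof (intro conjI allI ballI)
    show "bij_betw (iso_map L) (carrier (pow_syn ?R)) (carrier ?D)"
      using bij by (simp add: pow_syn_def)
    show "join_pres (pow_syn ?R) ?D (iso_map L)"
      unfolding join_pres_def
    proof (intro allI impI)
      fix S z assume h: "finite S \<and> S \<subseteq> carrier (pow_syn ?R) \<and> is_lub (pow_syn ?R) S z"
      then have S: "S \<subseteq> Pow ?C" by (simp add: pow_syn_def)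
      then have z: "z = \<Union>S" using h pow_lub[OF S] by simp
      have IS: "iso_map L ` S \<subseteq> Sat L" by (intro image_subsetI isoSat)
      have IZ: "iso_map L z = \<Inter>(iso_map L ` S)" unfolding z isoE by auto
      show "is_lub ?D (iso_map L ` S) (iso_map L z)"
        using D_lub[OF IS] IZ by simp
    qed
    show "iso_map L (trans (pow_syn ?R) a X) = trans ?D a (iso_map L X)"
      if X: "X \<in> carrier (pow_syn ?R)" for a X
    proof -
      have XC: "X \<subseteq> ?C" using X by (simp add: pow_syn_def)
      have "iso_map L (trans (pow_syn ?R) a X) = {v. syn_class ?R (rev v) \<notin> {syn_class ?R (w @ [a]) | w. syn_class ?R w \<in> X}}"
        unfolding isoE by (simp add: pow_syn_def syn_delta_img[OF XC])
      also have "\<dots> = Tr L a (iso_map L X)"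
      proof (intro set_eqI)
        fix v
        have "(\<exists>w. syn_class ?R (rev v) = syn_class ?R (w @ [a]) \<and> syn_class ?R w \<in> X)
            \<longleftrightarrow> (\<exists>w. syn_equiv L v (a # w) \<and> syn_class ?R (rev w) \<in> X)"
        proof
          assume "\<exists>w. syn_class ?R (rev v) = syn_class ?R (w @ [a]) \<and> syn_class ?R w \<in> X"
          then obtain w where "syn_class ?R (rev v) = syn_class ?R (w @ [a])" "syn_class ?R w \<in> X" by blast
          then show "\<exists>w. syn_equiv L v (a # w) \<and> syn_class ?R (rev w) \<in> X"
            by (intro exI[of _ "rev w"]) (simp add: cR_eq)
        next
          assume "\<exists>w. syn_equiv L v (a # w) \<and> syn_class ?R (rev w) \<in> X"
          then obtain w where "syn_equiv L v (a # w)" "syn_class ?R (rev w) \<in> X" by blast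
          then show "\<exists>w. syn_class ?R (rev v) = syn_class ?R (w @ [a]) \<and> syn_class ?R w \<in> X"
            by (intro exI[of _ "rev w"]) (simp add: cR_eq)
        qed
        note eq = this
        have l: "v \<in> {v. syn_class ?R (rev v) \<notin> {syn_class ?R (w @ [a]) | w. syn_class ?R w \<in> X}}
            \<longleftrightarrow> \<not> (\<exists>w. syn_class ?R (rev v) = syn_class ?R (w @ [a]) \<and> syn_class ?R w \<in> X)"
          by auto
        have r: "v \<in> Tr L a (iso_map L X) \<longleftrightarrow> \<not> (\<exists>w. syn_equiv L v (a # w) \<and> syn_class ?R (rev w) \<in> X)"
          unfolding Tr_def isoE by auto
        show "v \<in> {v. syn_class ?R (rev v) \<notin> {syn_class ?R (w @ [a]) | w. syn_class ?R w \<in> X}}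
            \<longleftrightarrow> v \<in> Tr L a (iso_map L X)"
          using l r eq by simp
      qed
      finally show ?thesis by simp
    qed
    show "iso_map L (init (pow_syn ?R)) = init ?D"
    proof -
      have "syn_class ?R (rev v) = syn_class ?R [] \<longleftrightarrow> syn_equiv L v []" for v
        using cR_eq[of L v "[]"] by simp
      then show ?thesis unfolding isoE by (simp add: pow_syn_def)
    qed
    show "x \<in> final (pow_syn ?R) \<longleftrightarrow> iso_map L x \<in> final ?D"
      if x: "x \<in> carrier (pow_syn ?R)" for x
    proof -
      have sf: "syn_final ?R = (\<lambda>w. syn_class ?R (rev w)) ` L"
        unfolding syn_final_def rev_lang_def by (simp add: image_image)
      have "x \<in> final (pow_syn ?R) \<longleftrightarrow> x \<inter> syn_final ?R \<noteq> {}"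
        using x by (simp add: pow_syn_def)
      also have "\<dots> \<longleftrightarrow> (\<exists>w\<in>L. syn_class ?R (rev w) \<in> x)"
        unfolding sf by blast
      also have "\<dots> \<longleftrightarrow> \<not> L \<subseteq> iso_map L x"
        unfolding isoE by blast
      also have "\<dots> \<longleftrightarrow> iso_map L x \<in> final ?D"
        using isoSat[of x] by simp
      finally show ?thesis .
    qed
  qed
  show ?thesis using P1 P2 P3 dD by simp
qed

end
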